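(* Let $R$ be a ring. (1) For each $S\in\mathrm{Den}_l(R)$, the poset $(\{S'\in\mathrm{Den}_l(R)\mid S\subseteq S'\},\subseteq)$ has a maximal element. (2) The set $\mathrm{maxDen}_l(R)$ of maximal elements of the poset $(\mathrm{Den}_l(R),\subseteq)$ is non-empty.
   Context: Rings are associative with $1$. A multiplicatively closed subset $S$ ($1\in S$, $0\notin S$, closed under products) is a left Ore set if $Sr\cap Rs\ne\emptyset$ for all $r\in R,s\in S$; it is a left denominator set if moreover $rs=0$ ($r\in R$, $s\in S$) implies $tr=0$ for some $t\in S$. $\mathrm{Den}_l(R)$ is the set of all left denominator sets of $R$. *)

theory Defs
  imports Main
begin

definition mult_closed :: "'a::ring_1 set \<Rightarrow> bool" where
  "mult_closed S \<longleftrightarrow> 1 \<in> S \<and> 0 \<notin> S \<and> (\<forall>s\<in>S. \<forall>t\<in>S. s * t \<in> S)"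

definition left_ore_set :: "'a::ring_1 set \<Rightarrow> bool" where
  "left_ore_set S \<longleftrightarrow> mult_closed S \<and>
     (\<forall>r. \<forall>s\<in>S. \<exists>s'\<in>S. \<exists>r'. s' * r = r' * s)"

definition left_denominator_set :: "'a::ring_1 set \<Rightarrow> bool" where
  "left_denominator_set S \<longleftrightarrow> left_ore_set S \<and>
     (\<forall>r. \<forall>s\<in>S. r * s = 0 \<longrightarrow> (\<exists>t\<in>S. t * r = 0))"

definition Den_l :: "'a::ring_1 set set" where
  "Den_l = {S. left_denominator_set S}"

definition maxDen_l :: "'a::ring_1 set set" where
  "maxDen_l = {S \<in> Den_l. \<forall>T\<in>Den_l. S \<subseteq> T \<longrightarrow> T = S}"

end

theory Submission
  imports Defs
begin

lemma chain_union_den: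
  assumes C: "C \<in> chains (Den_l :: 'a::ring_1 set set)" and ne: "C \<noteq> {}"
  shows "\<Union>C \<in> Den_l"
proof -
  have sub: "\<And>A. A \<in> C \<Longrightarrow> left_denominator_set A"
    using C by (auto simp: chains_def Den_l_def)
  have ch: "\<And>A B. A \<in> C \<Longrightarrow> B \<in> C \<Longrightarrow> A \<subseteq> B \<or> B \<subseteq> A"
    using C by (auto simp: chains_def chain_subset_def)
  have mc: "mult_closed (\<Union>C)"
    unfolding mult_closed_def
  proof (intro conjI ballI)
    obtain A where "A \<in> C" using ne by auto
    then show "1 \<in> \<Union>C" using sub[of A]
      by (auto simp: left_denominator_set_def left_ore_set_def mult_closed_def)
    show "0 \<notin> \<Union>C" using sub
      by (auto simp: left_denominator_set_def left_ore_set_def mult_closed_def)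
  next
    fix s t assume "s \<in> \<Union>C" "t \<in> \<Union>C"
    then obtain A B where AB: "A \<in> C" "B \<in> C" "s \<in> A" "t \<in> B" by auto
    show "s * t \<in> \<Union>C"
    proof (cases "A \<subseteq> B")
      case True
      then show ?thesis using AB sub[of B]
        by (auto simp: left_denominator_set_def left_ore_set_def mult_closed_def)
    next
      case False
      then have "B \<subseteq> A" using ch AB by blast
      then show ?thesis using AB sub[of A]
        by (auto simp: left_denominator_set_def left_ore_set_def mult_closed_def)
    qed
  qed
  have ore: "\<forall>r. \<forall>s\<in>\<Union>C. \<exists>s'\<in>\<Union>C. \<exists>r'. s' * r = r' * s"
  proof (intro allI ballI)
    fix r s assume "s \<in> \<Union>C"
    then obtain A where A: "A \<in> C" "s \<in> A" by auto
    then obtain s' r' where "s' \<in> A" "s' * r = r' * s" using sub[of A]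
      unfolding left_denominator_set_def left_ore_set_def by meson
    then show "\<exists>s'\<in>\<Union>C. \<exists>r'. s' * r = r' * s" using A by blast
  qed
  have den: "\<forall>r. \<forall>s\<in>\<Union>C. r * s = 0 \<longrightarrow> (\<exists>t\<in>\<Union>C. t * r = 0)"
  proof (intro allI ballI impI)
    fix r s assume "s \<in> \<Union>C" "r * s = 0"
    then obtain A where A: "A \<in> C" "s \<in> A" by auto
    then obtain t where "t \<in> A" "t * r = 0" using sub[of A] \<open>r * s = 0\<close>
      by (auto simp: left_denominator_set_def)
    then show "\<exists>t\<in>\<Union>C. t * r = 0" using A by blast
  qed
  show ?thesis using mc ore den
    by (simp add: Den_l_def left_denominator_set_def left_ore_set_def)
qed

lemma part1:
  assumes S: "S \<in> (Den_l :: 'a::ring_1 set set)"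
  shows "\<exists>M \<in> {S' \<in> Den_l. S \<subseteq> S'}.
              \<forall>T \<in> {S' \<in> Den_l. S \<subseteq> S'}. M \<subseteq> T \<longrightarrow> T = M"
proof (rule Zorn_Lemma2)
  show "\<forall>D\<in>chains {S' \<in> Den_l. S \<subseteq> S'}. \<exists>U\<in>{S' \<in> Den_l. S \<subseteq> S'}. \<forall>X\<in>D. X \<subseteq> U"
  proof
    fix D assume D: "D \<in> chains {S' \<in> Den_l. S \<subseteq> S'}"
    show "\<exists>U\<in>{S' \<in> Den_l. S \<subseteq> S'}. \<forall>X\<in>D. X \<subseteq> U"
    proof (cases "D = {}")
      case True then show ?thesis using S by auto
    next
      case False
      have "D \<in> chains Den_l" using D by (auto simp: chains_def)
      then have "\<Union>D \<in> Den_l" using chain_union_den False by blast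
      moreover have "S \<subseteq> \<Union>D" using False D by (auto simp: chains_def)
      ultimately show ?thesis by blast
    qed
  qed
qed

lemma one_den: "{1} \<in> (Den_l :: 'a::ring_1 set set)"
  by (auto simp: Den_l_def left_denominator_set_def left_ore_set_def mult_closed_def intro: exI[of _ r for r])

theorem lemma3p7:
  shows "(\<forall>S \<in> (Den_l :: 'a::ring_1 set set).
            \<exists>M \<in> {S' \<in> Den_l. S \<subseteq> S'}.
              \<forall>T \<in> {S' \<in> Den_l. S \<subseteq> S'}. M \<subseteq> T \<longrightarrow> T = M)
         \<and> (maxDen_l :: 'a set set) \<noteq> {}"
proof
  show "\<forall>S \<in> (Den_l :: 'a::ring_1 set set).
            \<exists>M \<in> {S' \<in> Den_l. S \<subseteq> S'}.
              \<forall>T \<in> {S' \<in> Den_l. S \<subseteq> S'}. M \<subseteq> T \<longrightarrow> T = M"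
    using part1 by blast
  obtain M where M: "M \<in> {S' \<in> (Den_l :: 'a set set). {1} \<subseteq> S'}"
    "\<forall>T \<in> {S' \<in> Den_l. {1} \<subseteq> S'}. M \<subseteq> T \<longrightarrow> T = M"
    using part1[OF one_den] by blast
  have "M \<in> maxDen_l" unfolding maxDen_l_def using M by auto
  then show "(maxDen_l :: 'a set set) \<noteq> {}" by auto
qed

end
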